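(* Let $A<\mathbb{R}$ be any subring. Then the group $H(A)$ is inner amenable, i.e. there is a mean on $H(A)\setminus\{e\}$ invariant under conjugation by $H(A)$.
   Context: Let $\mathbb{P}^1=\mathbb{P}^1(\mathbb{R})$ with its usual topology (a circle) and the natural action of $\mathrm{PSL}_2(\mathbb{R})$. Let $G$ be the group of homeomorphisms of $\mathbb{P}^1$ which are piecewise in $\mathrm{PSL}_2(\mathbb{R})$ with finitely many pieces, each an interval. Let $\infty\in\mathbb{P}^1$ correspond to the first basis vector of $\mathbb{R}^2$ and $H<G$ its stabilizer. For a subring $A<\mathbb{R}$, $P_A$ is the set of fixed points of hyperbolic elements of $\mathrm{PSL}_2(A)$, $G(A)$ is the subgroup of $G$ of elements piecewise in $\mathrm{PSL}_2(A)$ with all interval endpoints in $P_A$, and $H(A)=G(A)\cap H$. *)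

theory Defs
  imports "HOL-Analysis.Analysis"
begin

text \<open>The projective line P^1(R): a point [x:y] with y \<noteq> 0 is encoded as Some (x/y),
  and the point [1:0] (the line spanned by the first basis vector) is None, i.e. \<infinity>.\<close>
type_synonym P1 = "real option"

abbreviation P1_inf :: P1 where "P1_inf \<equiv> None"

text \<open>Identification of P^1 with the unit circle (a bijection), used to give P^1 its topology.\<close>
definition P1_to_circle :: "P1 \<Rightarrow> complex" where
  "P1_to_circle p = (case p of None \<Rightarrow> 1
     | Some t \<Rightarrow> Complex ((t^2 - 1) / (t^2 + 1)) (2 * t / (t^2 + 1)))"

definition P1_top :: "P1 topology" where
  "P1_top = pullback_topology UNIV P1_to_circle (top_of_set (sphere (0::complex) 1))"

text \<open>2x2 real matrices (a,b,c,d) = [[a,b],[c,d]].\<close>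
type_synonym mat2 = "real \<times> real \<times> real \<times> real"

definition SL2 :: "real set \<Rightarrow> mat2 set" where
  "SL2 A = {(a,b,c,d). a \<in> A \<and> b \<in> A \<and> c \<in> A \<and> d \<in> A \<and> a * d - b * c = 1}"

text \<open>Projective (Moebius) action of a matrix on P^1: [x:y] \<mapsto> [ax+by : cx+dy].
  It only depends on the class of the matrix in PSL2.\<close>
definition mob :: "mat2 \<Rightarrow> P1 \<Rightarrow> P1" where
  "mob M p = (case M of (a,b,c,d) \<Rightarrow>
     (case p of
        None \<Rightarrow> (if c = 0 then None else Some (a / c))
      | Some t \<Rightarrow> (if c * t + d = 0 then None else Some ((a * t + b) / (c * t + d)))))"

definition subring_of_reals :: "real set \<Rightarrow> bool" where
  "subring_of_reals A \<longleftrightarrow> 0 \<in> A \<and> 1 \<in> A \<and>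
     (\<forall>x\<in>A. \<forall>y\<in>A. x + y \<in> A \<and> x - y \<in> A \<and> x * y \<in> A)"

definition hyperbolic :: "mat2 \<Rightarrow> bool" where
  "hyperbolic M = (case M of (a,b,c,d) \<Rightarrow> \<bar>a + d\<bar> > 2)"

definition P_A :: "real set \<Rightarrow> P1 set" where
  "P_A A = {p. \<exists>M\<in>SL2 A. hyperbolic M \<and> mob M p = p}"

text \<open>Closed interval of the circle P^1 from x to y, travelling in the positive direction
  (increasing on R, passing through \<infinity> from +\<infinity> to -\<infinity>).\<close>
definition cint :: "P1 \<Rightarrow> P1 \<Rightarrow> P1 set" where
  "cint x y = (case (x, y) of
      (Some a, Some b) \<Rightarrow> (if a \<le> b then Some ` {a..b}
                            else Some ` {a..} \<union> {None} \<union> Some ` {..b})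
    | (Some a, None) \<Rightarrow> Some ` {a..} \<union> {None}
    | (None, Some b) \<Rightarrow> {None} \<union> Some ` {..b}
    | (None, None) \<Rightarrow> {None})"

text \<open>G(A): homeomorphisms of P^1 which are piecewise in PSL2(A), with finitely many
  interval pieces whose endpoints lie in P_A.  (Pieces are taken closed, covering P^1;
  for homeomorphisms this is equivalent to a partition into intervals.)\<close>
definition G_A :: "real set \<Rightarrow> (P1 \<Rightarrow> P1) set" where
  "G_A A = {g. homeomorphic_map P1_top P1_top g \<and>
     (\<exists>ps :: (P1 \<times> P1 \<times> mat2) list.
        (\<Union>(x,y,M)\<in>set ps. cint x y) = UNIV \<and>
        (\<forall>(x,y,M)\<in>set ps. x \<in> P_A A \<and> y \<in> P_A A \<and> M \<in> SL2 A \<and>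
                            (\<forall>p\<in>cint x y. g p = mob M p)))}"

definition H_A :: "real set \<Rightarrow> (P1 \<Rightarrow> P1) set" where
  "H_A A = {g \<in> G_A A. g P1_inf = P1_inf}"

definition bdd_on :: "'a set \<Rightarrow> ('a \<Rightarrow> real) \<Rightarrow> bool" where
  "bdd_on X f \<longleftrightarrow> (\<exists>B. \<forall>x\<in>X. \<bar>f x\<bar> \<le> B)"

definition is_mean :: "'a set \<Rightarrow> (('a \<Rightarrow> real) \<Rightarrow> real) \<Rightarrow> bool" where
  "is_mean X m \<longleftrightarrow>
     (\<forall>f g. bdd_on X f \<longrightarrow> bdd_on X g \<longrightarrow> m (\<lambda>x. f x + g x) = m f + m g) \<and>
     (\<forall>f c. bdd_on X f \<longrightarrow> m (\<lambda>x. c * f x) = c * m f) \<and>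
     (\<forall>f. bdd_on X f \<longrightarrow> (\<forall>x\<in>X. f x \<ge> 0) \<longrightarrow> m f \<ge> 0) \<and>
     m (\<lambda>x. 1) = 1"

definition inner_amenable :: "('b \<Rightarrow> 'b) set \<Rightarrow> bool" where
  "inner_amenable Gr \<longleftrightarrow> (\<exists>m. is_mean (Gr - {id}) m \<and>
     (\<forall>h\<in>Gr. \<forall>f. bdd_on (Gr - {id}) f \<longrightarrow>
        m (\<lambda>x. f (inv h \<circ> x \<circ> h)) = m f))"

end

theory Submission
  imports Defs
begin


definition ultra :: "'a filter \<Rightarrow> bool" where
  "ultra F \<longleftrightarrow> F \<noteq> bot \<and> (\<forall>P. eventually P F \<or> eventually (\<lambda>x. \<not> P x) F)"

lemma max_filter_ultra:
  assumes "F \<noteq> bot"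
  assumes max: "\<And>G. G \<noteq> bot \<Longrightarrow> G \<le> F \<Longrightarrow> F = G"
  shows "ultra F"
  unfolding ultra_def
proof (intro conjI allI assms(1))
  fix P
  show "eventually P F \<or> (\<forall>\<^sub>Fx in F. \<not> P x)"
  proof (rule disjCI)
    assume "\<not> (\<forall>\<^sub>Fx in F. \<not> P x)"
    then have "inf F (principal {x. P x}) \<noteq> bot"
      by (simp add: trivial_limit_def eventually_inf_principal not_eventually)
    then have F: "F = inf F (principal {x. P x})"
      by (rule max) simp
    show "eventually P F"
      by (subst F) (simp add: eventually_inf_principal)
  qed
qed

lemma ex_ultra:
  fixes F :: "'a filter"
  assumes F: "F \<noteq> bot"
  shows "\<exists>U\<le>F. ultra U"
proof -
  let ?X = "{G. G \<noteq> bot \<and> G \<le> F}"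
  let ?R = "{(b, a). a \<noteq> bot \<and> a \<le> b \<and> b \<le> F}"
  have bot_notin_R: "c \<in> Chains ?R \<Longrightarrow> bot \<notin> c" for c
    by (auto simp: Chains_def)
  have [simp]: "Field ?R = ?X"
    by (auto simp: Field_def bot_unique)
  have "\<exists>m\<in>Field ?R. \<forall>a\<in>Field ?R. (m, a) \<in> ?R \<longrightarrow> a = m" (is "\<exists>m\<in>?A. ?B m")
  proof (rule Zorns_po_lemma)
    show "Partial_order ?R"
      by (auto simp: partial_order_on_def preorder_on_def
          antisym_def refl_on_def trans_def Field_def bot_unique)
    show "\<exists>u\<in>Field ?R. \<forall>a\<in>C. (a, u) \<in> ?R" if C: "C \<in> Chains ?R" for C
    proof (simp, intro exI conjI ballI)
      have Inf_C: "Inf C \<noteq> bot" "Inf C \<le> F" if "C \<noteq> {}"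
      proof -
        from C that have "Inf C = bot \<longleftrightarrow> (\<exists>x\<in>C. x = bot)"
          unfolding trivial_limit_def by (intro eventually_Inf_base) (auto simp: Chains_def)
        with C show "Inf C \<noteq> bot"
          by (simp add: bot_notin_R)
        from that obtain x where "x \<in> C" by auto
        with C show "Inf C \<le> F"
          by (auto intro!: Inf_lower2[of x] simp: Chains_def)
      qed
      then have [simp]: "inf F (Inf C) = (if C = {} then F else Inf C)"
        using C by (auto simp add: inf_absorb2)
      from C show "inf F (Inf C) \<noteq> bot"
        by (simp add: F Inf_C)
      from C show "inf F (Inf C) \<le> F"
        by (simp add: Chains_def Inf_C F)
      with C show "inf F (Inf C) \<le> x" "x \<le> F" if "x \<in> C" for x
        using that  by (auto intro: Inf_lower simp: Chains_def)
    qed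
  qed
  then obtain U where U: "U \<in> ?A" "?B U" ..
  show ?thesis
  proof
    from U show "U \<le> F \<and> ultra U"
      by (auto intro!: max_filter_ultra)
  qed
qed

lemma ultra_tendsto:
  fixes \<phi> :: "'a \<Rightarrow> real"
  assumes U: "ultra U" and B: "eventually (\<lambda>x. \<bar>\<phi> x\<bar> \<le> B) U"
  shows "(\<phi> \<longlongrightarrow> Lim U \<phi>) U"
proof -
  have nb: "U \<noteq> bot" using U by (simp add: ultra_def)
  have "compact {-B..B}" by simp
  moreover have "filtermap \<phi> U \<noteq> bot" using nb by (simp add: filtermap_bot_iff)
  moreover have "eventually (\<lambda>y. y \<in> {-B..B}) (filtermap \<phi> U)"
    unfolding eventually_filtermap by (rule eventually_mono[OF B]) auto
  ultimately obtain x where x: "inf (nhds x) (filtermap \<phi> U) \<noteq> bot"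
    unfolding compact_filter by blast
  have "(\<phi> \<longlongrightarrow> x) U"
  proof (rule topological_tendstoI)
    fix S :: "real set" assume S: "open S" "x \<in> S"
    show "eventually (\<lambda>i. \<phi> i \<in> S) U"
    proof (rule ccontr)
      assume "\<not> eventually (\<lambda>i. \<phi> i \<in> S) U"
      then have e: "eventually (\<lambda>i. \<phi> i \<notin> S) U" using U by (auto simp: ultra_def)
      have "eventually (\<lambda>y. y \<in> S) (nhds x)" using S by (rule eventually_nhds_in_open)
      moreover have "eventually (\<lambda>y. y \<notin> S) (filtermap \<phi> U)" using e by (simp add: eventually_filtermap)
      ultimately have "eventually (\<lambda>y. False) (inf (nhds x) (filtermap \<phi> U))"
        unfolding eventually_inf by blast
      then show False using x by (simp add: trivial_limit_def)
    qed
  qed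
  then show ?thesis using nb by (simp add: tendsto_Lim)
qed

lemma Lim_cong_ev:
  assumes "eventually (\<lambda>x. f x = g x) U"
  shows "Lim U f = Lim U g"
proof -
  have "(\<lambda>L. (f \<longlongrightarrow> L) U) = (\<lambda>L. (g \<longlongrightarrow> L) U)"
    using assms by (intro ext tendsto_cong) 
  then show ?thesis unfolding t2_space_class.Lim_def by simp
qed



definition subgrp :: "real set \<Rightarrow> bool" where
  "subgrp G \<longleftrightarrow> 0 \<in> G \<and> (\<forall>x\<in>G. \<forall>y\<in>G. x + y \<in> G \<and> x - y \<in> G)"

lemma subgrp_add: "subgrp G \<Longrightarrow> x \<in> G \<Longrightarrow> y \<in> G \<Longrightarrow> x + y \<in> G"
  by (simp add: subgrp_def)
lemma subgrp_diff: "subgrp G \<Longrightarrow> x \<in> G \<Longrightarrow> y \<in> G \<Longrightarrow> x - y \<in> G"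
  by (simp add: subgrp_def)
lemma subgrp_0: "subgrp G \<Longrightarrow> 0 \<in> G"
  by (simp add: subgrp_def)
lemma subgrp_nat_mult: "subgrp G \<Longrightarrow> x \<in> G \<Longrightarrow> real k * x \<in> G"
  by (induction k) (auto simp: subgrp_0 distrib_right intro: subgrp_add)
lemma subgrp_nat: "subgrp G \<Longrightarrow> 1 \<in> G \<Longrightarrow> real k \<in> G"
  using subgrp_nat_mult[of G 1 k] by simp
lemma subgrp_neg: "subgrp G \<Longrightarrow> x \<in> G \<Longrightarrow> - x \<in> G"
  using subgrp_diff[of G 0 x] subgrp_0[of G] by simp

fun Bx :: "real list \<Rightarrow> nat \<Rightarrow> (real \<Rightarrow> real) \<Rightarrow> real \<Rightarrow> real" where
  "Bx [] n f x = f x"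
| "Bx (s#ss) n f x = (\<Sum>k<n. Bx ss n f (x + real k * s)) / real n"

lemma Bx_add: "Bx ss n (\<lambda>y. f y + g y) x = Bx ss n f x + Bx ss n g x"
  by (induction ss arbitrary: x) (auto simp: sum.distrib add_divide_distrib)

lemma Bx_cmult: "Bx ss n (\<lambda>y. c * f y) x = c * Bx ss n f x"
  by (induction ss arbitrary: x) (auto simp: sum_distrib_left)

lemma Bx_const: "n > 0 \<Longrightarrow> Bx ss n (\<lambda>y. c) x = c"
  by (induction ss arbitrary: x) auto

lemma Bx_shift: "Bx ss n (\<lambda>y. f (y + t)) x = Bx ss n f (x + t)"
  by (induction ss arbitrary: x) (auto simp: algebra_simps)

lemma Bx_bound:
  assumes "subgrp G" "set ss \<subseteq> G" "x \<in> G" "\<forall>y\<in>G. \<bar>f y\<bar> \<le> B" "n > 0"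
  shows "\<bar>Bx ss n f x\<bar> \<le> B"
  using assms(2,3)
proof (induction ss arbitrary: x)
  case Nil then show ?case using assms by simp
next
  case (Cons s ss)
  have G: "x + real k * s \<in> G" for k using Cons.prems by (intro subgrp_add[OF assms(1)] subgrp_nat_mult[OF assms(1)]) auto
  have "\<bar>Bx ss n f (x + real k * s)\<bar> \<le> B" for k using Cons.IH[OF _ G] Cons.prems by simp
  then have "\<bar>\<Sum>k<n. Bx ss n f (x + real k * s)\<bar> \<le> (\<Sum>k<n. B)"
    by (intro order_trans[OF sum_abs sum_mono])
  then have "\<bar>\<Sum>k<n. Bx ss n f (x + real k * s)\<bar> \<le> real n * B" by simp
  then show ?case using \<open>n > 0\<close> by (simp add: abs_divide pos_divide_le_eq mult.commute)
qed

lemma Bx_nonneg: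
  assumes "subgrp G" "set ss \<subseteq> G" "x \<in> G" "\<forall>y\<in>G. f y \<ge> 0"
  shows "Bx ss n f x \<ge> 0"
  using assms(2,3)
proof (induction ss arbitrary: x)
  case Nil then show ?case using assms by simp
next
  case (Cons s ss)
  have G: "x + real k * s \<in> G" for k using Cons.prems by (intro subgrp_add[OF assms(1)] subgrp_nat_mult[OF assms(1)]) auto
  have "Bx ss n f (x + real k * s) \<ge> 0" for k using Cons.IH[OF _ G] Cons.prems by simp
  then have "(\<Sum>k<n. Bx ss n f (x + real k * s)) \<ge> 0"
    by (intro sum_nonneg)
  then show ?case by simp
qed

lemma Bx_local:
  assumes "subgrp G" "set ss \<subseteq> G" "x \<in> G"
    "\<forall>y\<in>G. y \<le> x + real n * (\<Sum>s\<leftarrow>ss. \<bar>s\<bar>) \<longrightarrow> f1 y = f2 y"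
  shows "Bx ss n f1 x = Bx ss n f2 x"
  using assms(2,3,4)
proof (induction ss arbitrary: x)
  case Nil then show ?case by simp
next
  case (Cons s ss)
  have "Bx ss n f1 (x + real k * s) = Bx ss n f2 (x + real k * s)" if "k < n" for k
  proof (rule Cons.IH)
    show "set ss \<subseteq> G" using Cons by simp
    show "x + real k * s \<in> G" using Cons.prems by (intro subgrp_add[OF assms(1)] subgrp_nat_mult[OF assms(1)]) auto
    have "real k * s \<le> real n * \<bar>s\<bar>"
    proof -
      have "real k * s \<le> real k * \<bar>s\<bar>" by (simp add: mult_left_mono)
      also have "\<dots> \<le> real n * \<bar>s\<bar>" using that by (simp add: mult_right_mono)
      finally show ?thesis .
    qed
    then show "\<forall>y\<in>G. y \<le> x + real k * s + real n * (\<Sum>s\<leftarrow>ss. \<bar>s\<bar>) \<longrightarrow> f1 y = f2 y"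
      using Cons.prems(3) by (auto simp: algebra_simps)
  qed
  then show ?case by simp
qed

lemma Bx_localG:
  assumes "subgrp G" "set ss \<subseteq> G" "x \<in> G" "\<forall>y\<in>G. f1 y = f2 y"
  shows "Bx ss n f1 x = Bx ss n f2 x"
  using assms Bx_local[of G ss x n f1 f2] by blast

lemma Bx_almost_inv:
  assumes "subgrp G" "set ss \<subseteq> G" "x \<in> G" "\<forall>y\<in>G. \<bar>f y\<bar> \<le> B" "n > 0" "t \<in> set ss"
  shows "\<bar>Bx ss n f (x + t) - Bx ss n f x\<bar> \<le> 2 * B / real n"
  using assms(2,3,6)
proof (induction ss arbitrary: x)
  case Nil then show ?case by simp
next
  case (Cons s ss)
  have G: "x + real k * s \<in> G" for k using Cons.prems by (intro subgrp_add[OF assms(1)] subgrp_nat_mult[OF assms(1)]) auto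
  show ?case
  proof (cases "t = s")
    case True
    have "(\<Sum>k<n. Bx ss n f (x + t + real k * s)) - (\<Sum>k<n. Bx ss n f (x + real k * s))
        = (\<Sum>k<n. Bx ss n f (x + real (Suc k) * s) - Bx ss n f (x + real k * s))"
      using True by (simp add: sum_subtractf algebra_simps)
    also have "\<dots> = Bx ss n f (x + real n * s) - Bx ss n f (x + real 0 * s)"
      by (rule sum_lessThan_telescope)
    finally have eq: "(\<Sum>k<n. Bx ss n f (x + t + real k * s)) - (\<Sum>k<n. Bx ss n f (x + real k * s))
        = Bx ss n f (x + real n * s) - Bx ss n f x" by simp
    have b1: "\<bar>Bx ss n f (x + real n * s)\<bar> \<le> B" 
      using Bx_bound[OF assms(1) _ G assms(4,5)] Cons by simp
    have b2: "\<bar>Bx ss n f x\<bar> \<le> B"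
      using Bx_bound[OF assms(1) _ Cons.prems(2) assms(4,5)] Cons by simp
    have "Bx (s#ss) n f (x + t) - Bx (s#ss) n f x
       = ((\<Sum>k<n. Bx ss n f (x + t + real k * s)) - (\<Sum>k<n. Bx ss n f (x + real k * s))) / real n"
      by (simp add: diff_divide_distrib)
    also have "\<dots> = (Bx ss n f (x + real n * s) - Bx ss n f x) / real n" using eq by simp
    finally have e2: "Bx (s#ss) n f (x + t) - Bx (s#ss) n f x = (Bx ss n f (x + real n * s) - Bx ss n f x) / real n" .
    have "\<bar>Bx ss n f (x + real n * s) - Bx ss n f x\<bar> \<le> 2 * B" using b1 b2 by linarith
    then have "\<bar>Bx ss n f (x + real n * s) - Bx ss n f x\<bar> / real n \<le> 2 * B / real n"
      using \<open>n > 0\<close> by (simp add: divide_right_mono)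
    then show ?thesis unfolding e2 by (simp add: abs_divide)
  next
    case False
    then have t: "t \<in> set ss" using Cons by simp
    have "\<bar>Bx ss n f (x + real k * s + t) - Bx ss n f (x + real k * s)\<bar> \<le> 2 * B / real n" for k
      using Cons.IH[OF _ G t] Cons by simp
    then have "\<bar>\<Sum>k<n. Bx ss n f (x + real k * s + t) - Bx ss n f (x + real k * s)\<bar> \<le> (\<Sum>k<n. 2 * B / real n)"
      by (intro order_trans[OF sum_abs sum_mono]) 
    then have "\<bar>\<Sum>k<n. Bx ss n f (x + real k * s + t) - Bx ss n f (x + real k * s)\<bar> \<le> real n * (2 * B / real n)"
      by simp
    then have "\<bar>\<Sum>k<n. Bx ss n f (x + real k * s + t) - Bx ss n f (x + real k * s)\<bar> / real n \<le> 2 * B / real n"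
      using \<open>n > 0\<close> by (simp add: pos_divide_le_eq mult.commute)
    moreover have "Bx (s#ss) n f (x + t) - Bx (s#ss) n f x = (\<Sum>k<n. Bx ss n f (x + real k * s + t) - Bx ss n f (x + real k * s)) / real n"
      by (simp add: sum_subtractf diff_divide_distrib add_ac)
    ultimately show ?thesis by (simp add: abs_divide)
  qed
qed



definition FGp :: "real set \<Rightarrow> ((real list \<times> nat) \<Rightarrow> bool) \<Rightarrow> bool" where
  "FGp G P \<longleftrightarrow> (\<exists>ts n0. set ts \<subseteq> G \<and> (\<forall>ss n. set ts \<subseteq> set ss \<longrightarrow> set ss \<subseteq> G \<longrightarrow> n0 \<le> n \<longrightarrow> P (ss,n)))"

lemma is_filter_FGp: "is_filter (FGp G)"
proof
  show "FGp G (\<lambda>x. True)" unfolding FGp_def by (rule exI[of _ "[]"]) auto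
next
  fix P Q assume "FGp G (\<lambda>x. P x)" "FGp G (\<lambda>x. Q x)"
  then obtain ts1 n1 ts2 n2 where
    1: "set ts1 \<subseteq> G" "\<forall>ss n. set ts1 \<subseteq> set ss \<longrightarrow> set ss \<subseteq> G \<longrightarrow> n1 \<le> n \<longrightarrow> P (ss,n)" and
    2: "set ts2 \<subseteq> G" "\<forall>ss n. set ts2 \<subseteq> set ss \<longrightarrow> set ss \<subseteq> G \<longrightarrow> n2 \<le> n \<longrightarrow> Q (ss,n)"
    unfolding FGp_def by blast
  show "FGp G (\<lambda>x. P x \<and> Q x)" unfolding FGp_def
    by (rule exI[of _ "ts1 @ ts2"], rule exI[of _ "max n1 n2"]) (use 1 2 in auto)
next
  fix P Q assume "\<forall>x. P x \<longrightarrow> Q x" "FGp G (\<lambda>x. P x)"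
  then show "FGp G (\<lambda>x. Q x)" unfolding FGp_def by blast
qed

definition FG :: "real set \<Rightarrow> (real list \<times> nat) filter" where
  "FG G = Abs_filter (FGp G)"

lemma eventually_FG: "eventually P (FG G) \<longleftrightarrow> FGp G P"
  unfolding FG_def by (rule eventually_Abs_filter[OF is_filter_FGp])

lemma FG_nbot: "FG G \<noteq> bot"
proof
  assume "FG G = bot"
  then have "eventually (\<lambda>x. False) (FG G)" by simp
  then show False unfolding eventually_FG FGp_def by force
qed

lemma FG_setG: "eventually (\<lambda>j. set (fst j) \<subseteq> G) (FG G)"
  unfolding eventually_FG FGp_def by (rule exI[of _ "[]"]) auto

lemma FG_n: "eventually (\<lambda>j. N \<le> snd j) (FG G)"
  unfolding eventually_FG FGp_def by (rule exI[of _ "[]"], rule exI[of _ N]) auto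

lemma FG_t: "t \<in> G \<Longrightarrow> eventually (\<lambda>j. t \<in> set (fst j)) (FG G)"
  unfolding eventually_FG FGp_def by (rule exI[of _ "[t]"]) auto

definition x0 :: "real set \<Rightarrow> real list \<Rightarrow> nat \<Rightarrow> real" where
  "x0 G ss n = (if 1 \<in> G then - real (n * (1 + nat \<lceil>\<Sum>s\<leftarrow>ss. \<bar>s\<bar>\<rceil>)) else 0)"

lemma x0_in: assumes "subgrp G" shows "x0 G ss n \<in> G"
proof (cases "1 \<in> G")
  case True
  have "- real (n * (1 + nat \<lceil>\<Sum>s\<leftarrow>ss. \<bar>s\<bar>\<rceil>)) \<in> G" by (rule subgrp_neg[OF assms subgrp_nat[OF assms True]])
  then show ?thesis unfolding x0_def if_P[OF True] .
next
  case False
  show ?thesis unfolding x0_def if_not_P[OF False] by (rule subgrp_0[OF assms])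
qed

definition bddG :: "real set \<Rightarrow> (real \<Rightarrow> real) \<Rightarrow> bool" where
  "bddG G f \<longleftrightarrow> (\<exists>B. \<forall>x\<in>G. \<bar>f x\<bar> \<le> B)"

definition muG :: "real set \<Rightarrow> (real list \<times> nat) filter \<Rightarrow> (real \<Rightarrow> real) \<Rightarrow> real" where
  "muG G U f = Lim U (\<lambda>j. Bx (fst j) (snd j) f (x0 G (fst j) (snd j)))"

locale ugrp =
  fixes G :: "real set" and U :: "(real list \<times> nat) filter"
  assumes G: "subgrp G" and U: "ultra U" and UF: "U \<le> FG G"
begin

lemma Unb: "U \<noteq> bot" using U by (simp add: ultra_def)

lemma ev_good: "eventually (\<lambda>j. set (fst j) \<subseteq> G \<and> N \<le> snd j \<and> 0 < snd j) U"
proof -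
  have "eventually (\<lambda>j. set (fst j) \<subseteq> G \<and> max N 1 \<le> snd j) (FG G)"
    using FG_setG FG_n eventually_conj by blast
  then have "eventually (\<lambda>j. set (fst j) \<subseteq> G \<and> max N 1 \<le> snd j) U" using UF filter_leD by blast
  then show ?thesis by (rule eventually_mono) auto
qed

lemma ev_t: "t \<in> G \<Longrightarrow> eventually (\<lambda>j. t \<in> set (fst j)) U"
  using FG_t UF filter_leD by blast

abbreviation T where "T f j \<equiv> Bx (fst j) (snd j) f (x0 G (fst j) (snd j))"

lemma T_bound:
  assumes "\<forall>x\<in>G. \<bar>f x\<bar> \<le> B"
  shows "eventually (\<lambda>j. \<bar>T f j\<bar> \<le> B) U"
  by (rule eventually_mono[OF ev_good[of 0]]) (use Bx_bound[OF G _ x0_in[OF G] assms] in auto)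

lemma T_tendsto: "bddG G f \<Longrightarrow> (T f \<longlongrightarrow> muG G U f) U"
  unfolding bddG_def muG_def using ultra_tendsto[OF U T_bound] by blast

lemma mu_add: "bddG G f \<Longrightarrow> bddG G g \<Longrightarrow> muG G U (\<lambda>x. f x + g x) = muG G U f + muG G U g"
proof -
  assume f: "bddG G f" and g: "bddG G g"
  have "((\<lambda>j. T f j + T g j) \<longlongrightarrow> muG G U f + muG G U g) U"
    by (intro tendsto_add T_tendsto f g)
  then show ?thesis unfolding muG_def Bx_add using Unb by (simp add: tendsto_Lim)
qed

lemma mu_cmult: "bddG G f \<Longrightarrow> muG G U (\<lambda>x. c * f x) = c * muG G U f"
proof -
  assume f: "bddG G f"
  have "((\<lambda>j. c * T f j) \<longlongrightarrow> c * muG G U f) U"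
    by (intro tendsto_mult tendsto_const T_tendsto f)
  then show ?thesis unfolding muG_def Bx_cmult using Unb by (simp add: tendsto_Lim)
qed

lemma mu_nonneg: "bddG G f \<Longrightarrow> \<forall>x\<in>G. f x \<ge> 0 \<Longrightarrow> muG G U f \<ge> 0"
proof -
  assume f: "bddG G f" and p: "\<forall>x\<in>G. f x \<ge> 0"
  have "eventually (\<lambda>j. 0 \<le> T f j) U"
    by (rule eventually_mono[OF ev_good[of 0]]) (use Bx_nonneg[OF G _ x0_in[OF G] p] in auto)
  then show ?thesis using tendsto_lowerbound[OF T_tendsto[OF f]] Unb by blast
qed

lemma mu_bound: "\<forall>x\<in>G. \<bar>f x\<bar> \<le> B \<Longrightarrow> \<bar>muG G U f\<bar> \<le> B"
proof -
  assume b: "\<forall>x\<in>G. \<bar>f x\<bar> \<le> B"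
  then have f: "bddG G f" unfolding bddG_def by blast
  have "eventually (\<lambda>j. \<bar>T f j\<bar> \<le> B) U" by (rule T_bound[OF b])
  then have "eventually (\<lambda>j. T f j \<le> B) U" "eventually (\<lambda>j. - B \<le> T f j) U"
    by (auto elim: eventually_mono)
  then have "muG G U f \<le> B" "- B \<le> muG G U f"
    using tendsto_upperbound[OF T_tendsto[OF f]] tendsto_lowerbound[OF T_tendsto[OF f]] Unb by blast+
  then show ?thesis by linarith
qed

lemma mu_one: "muG G U (\<lambda>x. 1) = 1"
proof -
  have "eventually (\<lambda>j. T (\<lambda>x. 1) j = 1) U"
    by (rule eventually_mono[OF ev_good[of 0]]) (auto simp: Bx_const)
  then have "muG G U (\<lambda>x. 1) = Lim U (\<lambda>j. 1)" unfolding muG_def by (rule Lim_cong_ev)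
  then show ?thesis using Unb by (simp add: tendsto_Lim)
qed

lemma mu_localG: "\<forall>x\<in>G. f1 x = f2 x \<Longrightarrow> muG G U f1 = muG G U f2"
  unfolding muG_def
  by (rule Lim_cong_ev, rule eventually_mono[OF ev_good[of 0]]) (use Bx_localG[OF G _ x0_in[OF G]] in auto)

lemma mu_local_neg:
  assumes one: "1 \<in> G" and eq: "\<forall>x\<in>G. x \<le> - R \<longrightarrow> f1 x = f2 x"
  shows "muG G U f1 = muG G U f2"
  unfolding muG_def
proof (rule Lim_cong_ev, rule eventually_mono[OF ev_good[of "nat \<lceil>R\<rceil>"]])
  fix j :: "real list \<times> nat"
  assume j: "set (fst j) \<subseteq> G \<and> nat \<lceil>R\<rceil> \<le> snd j \<and> 0 < snd j"
  obtain ss n where jj: "j = (ss, n)" by (cases j)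
  define S where "S = (\<Sum>s\<leftarrow>ss. \<bar>s\<bar>)"
  have S0: "S \<ge> 0" unfolding S_def by (induction ss) auto
  have "x0 G ss n = - (real n * (1 + real (nat \<lceil>S\<rceil>)))" unfolding x0_def S_def using one by (simp add: algebra_simps)
  moreover have "real (nat \<lceil>S\<rceil>) \<ge> S" by linarith
  ultimately have "x0 G ss n + real n * S \<le> - real n"
  proof -
    assume a: "x0 G ss n = - (real n * (1 + real (nat \<lceil>S\<rceil>)))" "S \<le> real (nat \<lceil>S\<rceil>)"
    have "real n * S \<le> real n * real (nat \<lceil>S\<rceil>)" using a(2) by (simp add: mult_left_mono)
    then show ?thesis using a(1) by (simp add: algebra_simps)
  qed
  moreover have "R \<le> real n"
  proof -
    have "nat \<lceil>R\<rceil> \<le> n" using j jj by simp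
    then show ?thesis by linarith
  qed
  ultimately have "\<forall>y\<in>G. y \<le> x0 G ss n + real n * S \<longrightarrow> f1 y = f2 y" using eq by force
  then show "T f1 j = T f2 j" using Bx_local[OF G, of ss "x0 G ss n" n f1 f2] x0_in[OF G] j jj S_def by simp
qed

lemma mu_inv:
  assumes t: "t \<in> G" and f: "bddG G f"
  shows "muG G U (\<lambda>x. f (x + t)) = muG G U f"
proof -
  obtain B where B: "\<forall>x\<in>G. \<bar>f x\<bar> \<le> B" using f unfolding bddG_def by blast
  have ft: "bddG G (\<lambda>x. f (x + t))" unfolding bddG_def using B subgrp_add[OF G _ t] by blast
  have lim_n: "filterlim (\<lambda>j. real (snd j)) at_top U"
    unfolding filterlim_at_top
  proof
    fix Z :: real
    show "eventually (\<lambda>j. Z \<le> real (snd j)) U"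
      by (rule eventually_mono[OF ev_good[of "nat \<lceil>Z\<rceil>"]]) linarith
  qed
  have z: "((\<lambda>j. 2 * B / real (snd j)) \<longlongrightarrow> 0) U"
    by (intro tendsto_divide_0[OF tendsto_const] filterlim_at_top_imp_at_infinity lim_n)
  have ev: "eventually (\<lambda>j. norm (T (\<lambda>x. f (x + t)) j - T f j) \<le> 2 * B / real (snd j)) U"
    using eventually_conj[OF ev_good[of 0] ev_t[OF t]]
  proof (rule eventually_mono)
    fix j :: "real list \<times> nat" assume j: "(set (fst j) \<subseteq> G \<and> 0 \<le> snd j \<and> 0 < snd j) \<and> t \<in> set (fst j)"
    show "norm (T (\<lambda>x. f (x + t)) j - T f j) \<le> 2 * B / real (snd j)"
      unfolding Bx_shift real_norm_def using Bx_almost_inv[OF G _ x0_in[OF G] B] j by blast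
  qed
  have "((\<lambda>j. T (\<lambda>x. f (x + t)) j - T f j) \<longlongrightarrow> 0) U"
    by (rule Lim_null_comparison[OF ev z])
  moreover have "((\<lambda>j. T (\<lambda>x. f (x + t)) j - T f j) \<longlongrightarrow> muG G U (\<lambda>x. f (x + t)) - muG G U f) U"
    by (intro tendsto_diff T_tendsto f ft)
  ultimately show ?thesis using tendsto_unique[OF Unb] by fastforce
qed

end

lemma ex_ugrp: "subgrp G \<Longrightarrow> \<exists>U. ugrp G U"
  using ex_ultra[OF FG_nbot, of G] unfolding ugrp_def by blast



definition psiinv :: "complex \<Rightarrow> P1" where
  "psiinv z = (if z = 1 then None else Some (Im z / (1 - Re z)))"

abbreviation Circ :: "complex set" where "Circ \<equiv> sphere 0 1"

definition psir :: "real \<Rightarrow> complex" where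
  "psir t = complex_of_real ((t^2-1)/(t^2+1)) + \<i> * complex_of_real (2*t/(t^2+1))"

lemma psi_Some: "P1_to_circle (Some t) = psir t"
  unfolding P1_to_circle_def psir_def by (simp add: Complex_eq)

lemma psi_None: "P1_to_circle None = 1"
  unfolding P1_to_circle_def by simp

lemma Re_psir: "Re (psir t) = (t^2-1)/(t^2+1)" and Im_psir: "Im (psir t) = 2*t/(t^2+1)"
  unfolding psir_def by simp_all

lemma t2p1: "(t::real)^2 + 1 > 0" using zero_le_power2[of t] by linarith

lemma in_Circ: "z \<in> Circ \<longleftrightarrow> Re z ^ 2 + Im z ^ 2 = 1"
proof -
  have "z \<in> Circ \<longleftrightarrow> cmod z ^ 2 = 1" using power2_eq_iff_nonneg[of "cmod z" 1] by simp
  then show ?thesis by (simp add: cmod_power2)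
qed

lemma psir_in: "psir t \<in> Circ"
proof -
  have d: "t^2 + 1 \<noteq> 0" using t2p1[of t] by linarith
  have a: "((t^2-1)/(t^2+1))^2 + (2*t/(t^2+1))^2 = ((t^2-1)^2 + (2*t)^2)/(t^2+1)^2"
    by (simp add: power_divide add_divide_distrib)
  have b: "(t^2-1)^2 + (2*t)^2 = (t^2+1)^2" by (simp add: power2_eq_square algebra_simps)
  have "((t^2-1)/(t^2+1))^2 + (2*t/(t^2+1))^2 = 1" unfolding a b using d by simp
  then show ?thesis unfolding in_Circ Re_psir Im_psir .
qed

lemma psi_in: "P1_to_circle p \<in> Circ"
  by (cases p) (use psir_in in \<open>auto simp: psi_Some psi_None\<close>)

lemma psir_ne1: "psir t \<noteq> 1"
proof
  assume "psir t = 1"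
  then have "Re (psir t) = 1" by simp
  then have "(t^2-1)/(t^2+1) = 1" by (simp add: Re_psir)
  then have "t^2 - 1 = t^2 + 1" using t2p1[of t] by (simp add: divide_eq_eq)
  then show False by simp
qed

lemma psiinv_psir: "Im (psir t) / (1 - Re (psir t)) = t"
proof -
  have d: "t^2 + 1 \<noteq> 0" using t2p1[of t] by linarith
  have "1 - (t^2-1)/(t^2+1) = 2/(t^2+1)" using d by (simp add: field_simps)
  then show ?thesis unfolding Re_psir Im_psir using d by (simp add: field_simps)
qed

lemma psiinv_psi: "psiinv (P1_to_circle p) = p"
  by (cases p) (auto simp: psiinv_def psi_Some psi_None psir_ne1 psiinv_psir)

lemma Circ_Re_lt: "z \<in> Circ \<Longrightarrow> z \<noteq> 1 \<Longrightarrow> Re z < 1"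
proof -
  assume z: "z \<in> Circ" "z \<noteq> 1"
  have e: "Re z ^ 2 + Im z ^ 2 = 1" using z in_Circ by blast
  have "Re z \<le> 1" using e by (smt (verit) power2_less_eq_zero_iff power2_eq_square mult_le_cancel_left1 zero_le_power2)
  moreover have "Re z \<noteq> 1"
  proof
    assume "Re z = 1"
    then have "Im z = 0" using e by simp
    then have "z = 1" using \<open>Re z = 1\<close> by (simp add: complex_eq_iff)
    then show False using z by simp
  qed
  ultimately show ?thesis by simp
qed

lemma psir_tau: 
  assumes z: "z \<in> Circ" "z \<noteq> 1"
  shows "psir (Im z / (1 - Re z)) = z"
proof -
  define x where "x = Re z" define y where "y = Im z"
  have e: "y^2 = 1 - x^2" using z in_Circ x_def y_def by auto
  have x1: "1 - x > 0" using Circ_Re_lt[OF z] x_def by simp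
  define t where "t = y / (1 - x)"
  have t2: "t^2 = (1+x)/(1-x)"
  proof -
    have "t^2 = y^2/(1-x)^2" unfolding t_def by (simp add: power_divide)
    also have "y^2 = (1-x)*(1+x)" using e by (simp add: algebra_simps power2_eq_square)
    finally show ?thesis using x1 by (simp add: power2_eq_square)
  qed
  have den: "t^2 + 1 = 2 / (1 - x)"
    unfolding t2 using x1 by (simp add: field_simps)
  have "(t^2-1)/(t^2+1) = x"
  proof -
    have "t^2 - 1 = 2 * x / (1 - x)"
      unfolding t2 using x1 by (simp add: field_simps)
    then have "(t^2-1)/(t^2+1) = (2 * x / (1 - x)) / (2 / (1 - x))" using den by simp
    then show ?thesis using x1 by simp
  qed
  moreover have "2*t/(t^2+1) = y"
  proof -
    have "2*t/(t^2+1) = (2 * y / (1 - x)) / (2 / (1 - x))" unfolding den unfolding t_def by simp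
    then show ?thesis using x1 by simp
  qed
  ultimately have "Re (psir t) = Re z" "Im (psir t) = Im z" unfolding Re_psir Im_psir x_def y_def by simp_all
  then show ?thesis unfolding t_def x_def y_def by (simp add: complex_eq_iff)
qed

lemma psi_psiinv: "z \<in> Circ \<Longrightarrow> P1_to_circle (psiinv z) = z"
  by (cases "z = 1") (auto simp: psiinv_def psi_Some psi_None psir_tau)

lemma topspace_P1: "topspace P1_top = UNIV"
  unfolding P1_top_def topspace_pullback_topology using psi_in by auto

lemma psi_homeo: "homeomorphic_map P1_top (top_of_set Circ) P1_to_circle"
  unfolding homeomorphic_map_maps homeomorphic_maps_def
proof (intro exI conjI)
  show "continuous_map P1_top (top_of_set Circ) P1_to_circle"
    unfolding P1_top_def using continuous_map_pullback[OF continuous_map_id, of UNIV P1_to_circle]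
    by (simp add: o_def)
  have "continuous_map (top_of_set Circ) (top_of_set Circ) (P1_to_circle \<circ> psiinv)"
    by (rule continuous_map_eq[OF continuous_map_id]) (simp add: psi_psiinv)
  then show "continuous_map (top_of_set Circ) P1_top psiinv"
    unfolding P1_top_def by (rule continuous_map_pullback') auto
  show "\<forall>x\<in>topspace P1_top. psiinv (P1_to_circle x) = x" by (simp add: psiinv_psi)
  show "\<forall>y\<in>topspace (top_of_set Circ). P1_to_circle (psiinv y) = y" by (simp add: psi_psiinv)
qed

lemma compact_P1: "compact_space P1_top"
  using homeomorphic_compact_space[OF homeomorphic_map_imp_homeomorphic_space[OF psi_homeo]]
  by (simp add: compact_space_subtopology)

lemma Hausdorff_P1: "Hausdorff_space P1_top"
  using homeomorphic_Hausdorff_space[OF homeomorphic_map_imp_homeomorphic_space[OF psi_homeo]]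
  by (simp add: Hausdorff_space_subtopology)

lemma cont_via_circle:
  assumes "continuous_on Circ (\<lambda>z. P1_to_circle (g (psiinv z)))"
  shows "continuous_map P1_top P1_top g"
proof -
  have "continuous_map (top_of_set Circ) (top_of_set Circ) (\<lambda>z. P1_to_circle (g (psiinv z)))"
    using assms psi_in by simp
  then have "continuous_map P1_top (top_of_set Circ) ((\<lambda>z. P1_to_circle (g (psiinv z))) \<circ> P1_to_circle)"
    unfolding P1_top_def by (rule continuous_map_pullback)
  then have "continuous_map P1_top (top_of_set Circ) (P1_to_circle \<circ> g)"
    by (simp add: o_def psiinv_psi)
  then show ?thesis unfolding P1_top_def by (rule continuous_map_pullback') auto
qed

lemma homeo_P1:
  assumes "continuous_map P1_top P1_top g" "bij g"
  shows "homeomorphic_map P1_top P1_top g"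
  using continuous_imp_homeomorphic_map[OF assms(1) compact_P1 Hausdorff_P1] assms(2)
  by (simp add: topspace_P1 bij_def)



definition Gphi :: "real \<Rightarrow> real \<Rightarrow> (real \<Rightarrow> real) \<Rightarrow> P1 \<Rightarrow> P1" where
  "Gphi p q \<phi> x = (case x of None \<Rightarrow> None | Some t \<Rightarrow> Some (if p \<le> t \<and> t \<le> q then \<phi> t else t))"

lemma Gphi_None[simp]: "Gphi p q \<phi> None = None" by (simp add: Gphi_def)
lemma Gphi_Some[simp]: "Gphi p q \<phi> (Some t) = Some (if p \<le> t \<and> t \<le> q then \<phi> t else t)" by (simp add: Gphi_def)

definition Lf :: "real \<Rightarrow> real \<Rightarrow> complex \<Rightarrow> real" where
  "Lf p q z = (1 + Re z) - (p+q) * Im z + p * q * (1 - Re z)"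

lemma Lf_key:
  assumes z: "z \<in> Circ" "z \<noteq> 1"
  shows "(Im z / (1 - Re z) - p) * (Im z / (1 - Re z) - q) * (1 - Re z) = Lf p q z"
proof -
  define x where "x = Re z" define y where "y = Im z"
  have e: "y^2 = (1 - x) * (1 + x)" using z in_Circ x_def y_def by (auto simp: algebra_simps power2_eq_square)
  have x1: "1 - x > 0" using Circ_Re_lt[OF z] x_def by simp
  have gen: "(A/d)*(B/d)*d = A*B/d" if "d \<noteq> 0" for A B d :: real using that by (simp add: field_simps power2_eq_square)
  have a: "y/(1-x) - p = (y - p*(1-x))/(1-x)" and b: "y/(1-x) - q = (y - q*(1-x))/(1-x)"
    using x1 by (simp_all add: field_simps)
  have "(y / (1 - x) - p) * (y / (1 - x) - q) * (1 - x) = ((y - p*(1-x)) * (y - q*(1-x))) / (1 - x)"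
    unfolding a b using x1 by (intro gen) simp
  also have "(y - p*(1-x)) * (y - q*(1-x)) = (1 - x) * ((1 + x) - (p+q)*y + p*q*(1-x))"
  proof -
    have "(y - p*(1-x)) * (y - q*(1-x)) = y^2 - (p+q)*y*(1-x) + p*q*(1-x)^2"
      by (simp add: algebra_simps power2_eq_square)
    also have "\<dots> = (1 - x) * ((1 + x) - (p+q)*y + p*q*(1-x))"
      unfolding e by (simp add: algebra_simps power2_eq_square)
    finally show ?thesis .
  qed
  also have "((1 - x) * ((1 + x) - (p+q)*y + p*q*(1-x))) / (1 - x) = (1 + x) - (p+q)*y + p*q*(1-x)" using x1 by simp
  finally show ?thesis unfolding Lf_def x_def y_def .
qed

lemma prod_le0: assumes "(p::real) < q" "(t - p) * (t - q) \<le> 0" shows "p \<le> t \<and> t \<le> q"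
proof (rule ccontr)
  assume "\<not> (p \<le> t \<and> t \<le> q)"
  then have "t < p \<or> q < t" by auto
  then have "(t-p)*(t-q) > 0"
  proof
    assume "t < p" then have "t - p < 0" "t - q < 0" using assms by auto
    then show ?thesis by (rule mult_neg_neg)
  next
    assume "q < t" then have "t - p > 0" "t - q > 0" using assms by auto
    then show ?thesis by (rule mult_pos_pos)
  qed
  then show False using assms by linarith
qed

lemma prod_ge0: assumes "(p::real) < q" "(t - p) * (t - q) \<ge> 0" "p \<le> t \<and> t \<le> q" shows "t = p \<or> t = q"
proof (rule ccontr)
  assume "\<not> (t = p \<or> t = q)"
  then have "t - p > 0" "t - q < 0" using assms by auto
  then have "(t-p)*(t-q) < 0" by (rule mult_pos_neg)
  then show False using assms by linarith
qed

lemma cont_psir: "continuous_on UNIV psir"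
proof -
  have "\<And>t::real. t^2 + 1 \<noteq> 0" using t2p1 by (smt (verit))
  then show ?thesis unfolding psir_def by (intro continuous_intros) auto
qed

lemma Gphi_cont:
  assumes pq: "p < q" and c: "continuous_on {p..q} \<phi>" and fp: "\<phi> p = p" and fq: "\<phi> q = q"
    and img: "\<phi> ` {p..q} \<subseteq> {p..q}"
  shows "continuous_map P1_top P1_top (Gphi p q \<phi>)"
proof (rule cont_via_circle)
  define S1 where "S1 = Circ \<inter> {z. Lf p q z \<le> 0}"
  define S2 where "S2 = Circ \<inter> {z. 0 \<le> Lf p q z}"
  let ?g = "\<lambda>z. P1_to_circle (Gphi p q \<phi> (psiinv z))"
  let ?tau = "\<lambda>z. Im z / (1 - Re z)"
  have cLf: "continuous_on UNIV (Lf p q)" unfolding Lf_def by (intro continuous_intros)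
  have cl1: "closed S1" unfolding S1_def
    by (intro closed_Int closed_sphere closed_Collect_le cLf continuous_on_const)
  have cl2: "closed S2" unfolding S2_def
    by (intro closed_Int closed_sphere closed_Collect_le cLf continuous_on_const)
  have Lf1: "Lf p q 1 = 2" by (simp add: Lf_def)
  have S1_ne1: "z \<noteq> 1" if "z \<in> S1" for z using that Lf1 unfolding S1_def by auto
  have S1_tau: "p \<le> ?tau z \<and> ?tau z \<le> q" if "z \<in> S1" for z
  proof -
    have z: "z \<in> Circ" "z \<noteq> 1" using that S1_ne1 unfolding S1_def by auto
    have "1 - Re z > 0" using Circ_Re_lt[OF z] by simp
    moreover have "(?tau z - p) * (?tau z - q) * (1 - Re z) \<le> 0" using Lf_key[OF z] that unfolding S1_def by simp
    ultimately have "(?tau z - p) * (?tau z - q) \<le> 0" by (simp add: mult_le_0_iff)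
    then show ?thesis using prod_le0[OF pq] by blast
  qed
  have eq1: "?g z = psir (\<phi> (?tau z))" if "z \<in> S1" for z
    using S1_ne1[OF that] S1_tau[OF that] by (simp add: psiinv_def psi_Some)
  have eq2: "?g z = z" if "z \<in> S2" for z
  proof (cases "z = 1")
    case True then show ?thesis by (simp add: psiinv_def psi_None)
  next
    case False
    have z: "z \<in> Circ" "z \<noteq> 1" using that False unfolding S2_def by auto
    have "1 - Re z > 0" using Circ_Re_lt[OF z] by simp
    moreover have "(?tau z - p) * (?tau z - q) * (1 - Re z) \<ge> 0" using Lf_key[OF z] that unfolding S2_def by simp
    ultimately have "(?tau z - p) * (?tau z - q) \<ge> 0" by (simp add: zero_le_mult_iff)
    then have "Gphi p q \<phi> (Some (?tau z)) = Some (?tau z)" using prod_ge0[OF pq] fp fq by auto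
    then show ?thesis using False psir_tau[OF z] by (simp add: psiinv_def psi_Some)
  qed
  have c1: "continuous_on S1 ?g"
  proof (rule continuous_on_eq)
    have ct: "continuous_on S1 ?tau" by (intro continuous_intros) (use S1_ne1 S1_def Circ_Re_lt in force)
    have "continuous_on S1 (\<phi> \<circ> ?tau)"
      by (rule continuous_on_compose[OF ct continuous_on_subset[OF c]]) (use S1_tau in auto)
    then have "continuous_on S1 (psir \<circ> (\<phi> \<circ> ?tau))"
      by (rule continuous_on_compose[OF _ continuous_on_subset[OF cont_psir]]) auto
    then show "continuous_on S1 (\<lambda>z. psir (\<phi> (?tau z)))" by (simp add: o_def)
    show "\<And>z. z \<in> S1 \<Longrightarrow> psir (\<phi> (?tau z)) = ?g z" using eq1 by simp
  qed
  have c2: "continuous_on S2 ?g"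
    by (rule continuous_on_eq[OF continuous_on_id]) (use eq2 in simp)
  have "S1 \<union> S2 = Circ" unfolding S1_def S2_def by auto
  then show "continuous_on Circ ?g" using continuous_on_closed_Un[OF cl1 cl2 c1 c2] by simp
qed

lemma Gphi_bij:
  assumes pq: "p \<le> q" and b: "bij_betw \<phi> {p..q} {p..q}"
  shows "bij (Gphi p q \<phi>)"
  unfolding bij_def
proof
  have img: "\<phi> t \<in> {p..q}" if "t \<in> {p..q}" for t using b that bij_betwE by blast
  show "inj (Gphi p q \<phi>)"
  proof (rule injI)
    fix x y assume e: "Gphi p q \<phi> x = Gphi p q \<phi> y"
    show "x = y"
    proof (cases x; cases y)
      fix s t assume xs: "x = Some s" and yt: "y = Some t"
      have "(if p \<le> s \<and> s \<le> q then \<phi> s else s) = (if p \<le> t \<and> t \<le> q then \<phi> t else t)"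
        using e xs yt by simp
      then have "s = t" using img[of s] img[of t] bij_betw_imp_inj_on[OF b]
        by (auto split: if_splits simp: inj_on_def)
      then show ?thesis using xs yt by simp
    qed (use e in auto)
  qed
  show "surj (Gphi p q \<phi>)"
  proof (rule surjI[where f = "\<lambda>x. case x of None \<Rightarrow> None | Some s \<Rightarrow> Some (if p \<le> s \<and> s \<le> q then inv_into {p..q} \<phi> s else s)"])
    fix x show "Gphi p q \<phi> (case x of None \<Rightarrow> None | Some s \<Rightarrow> Some (if p \<le> s \<and> s \<le> q then inv_into {p..q} \<phi> s else s)) = x"
    proof (cases x)
      case (Some s)
      show ?thesis
      proof (cases "p \<le> s \<and> s \<le> q")
        case True
        have s: "s \<in> \<phi> ` {p..q}" using True b by (simp add: bij_betw_def)
        have "inv_into {p..q} \<phi> s \<in> {p..q}" using s by (rule inv_into_into)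
        moreover have "\<phi> (inv_into {p..q} \<phi> s) = s" using s by (rule f_inv_into_f)
        ultimately have "inv_into {p..q} \<phi> s \<in> {p..q} \<and> \<phi> (inv_into {p..q} \<phi> s) = s" by blast
        then show ?thesis using Some True by (auto simp del: atLeastAtMost_iff) (auto)
      qed (use Some in auto)
    qed simp
  qed
qed

lemma Gphi_homeo:
  assumes pq: "p < q" and c: "continuous_on {p..q} \<phi>" and fp: "\<phi> p = p" and fq: "\<phi> q = q"
    and b: "bij_betw \<phi> {p..q} {p..q}"
  shows "homeomorphic_map P1_top P1_top (Gphi p q \<phi>)"
proof -
  have img: "\<phi> ` {p..q} \<subseteq> {p..q}" using b by (simp add: bij_betw_def)
  have "p \<le> q" using pq by simp
  then show ?thesis by (rule homeo_P1[OF Gphi_cont[OF pq c fp fq img] Gphi_bij[OF _ b]])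
qed



lemma sr_0: "subring_of_reals A \<Longrightarrow> 0 \<in> A" by (simp add: subring_of_reals_def)
lemma sr_1: "subring_of_reals A \<Longrightarrow> 1 \<in> A" by (simp add: subring_of_reals_def)
lemma sr_add: "subring_of_reals A \<Longrightarrow> x \<in> A \<Longrightarrow> y \<in> A \<Longrightarrow> x + y \<in> A" by (simp add: subring_of_reals_def)
lemma sr_diff: "subring_of_reals A \<Longrightarrow> x \<in> A \<Longrightarrow> y \<in> A \<Longrightarrow> x - y \<in> A" by (simp add: subring_of_reals_def)
lemma sr_mult: "subring_of_reals A \<Longrightarrow> x \<in> A \<Longrightarrow> y \<in> A \<Longrightarrow> x * y \<in> A" by (simp add: subring_of_reals_def)
lemma sr_2: "subring_of_reals A \<Longrightarrow> 2 \<in> A" using sr_add[OF _ sr_1 sr_1] by simp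

definition Usq :: "real set \<Rightarrow> real set" where
  "Usq A = {x. \<exists>u\<in>A. \<exists>w\<in>A. u * w = 1 \<and> x = u^2}"

lemma Usq_E:
  assumes "x \<in> Usq A"
  obtains u w where "u \<in> A" "w \<in> A" "u * w = 1" "x = u^2" "u \<noteq> 0" "w = 1 / u"
proof -
  obtain u w where uw: "u \<in> A" "w \<in> A" "u * w = 1" "x = u^2" using assms unfolding Usq_def by blast
  have u0: "u \<noteq> 0" using uw(3) by auto
  have "w = 1 / u" using u0 uw(3) by (simp add: eq_divide_eq mult.commute)
  then show ?thesis using that uw u0 by blast
qed

lemma Usq_pos: "x \<in> Usq A \<Longrightarrow> x > 0"
  by (erule Usq_E) simp

lemma Usq_A: "subring_of_reals A \<Longrightarrow> x \<in> Usq A \<Longrightarrow> x \<in> A"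
  by (erule Usq_E) (simp add: power2_eq_square sr_mult)

lemma Usq_inv_A: "subring_of_reals A \<Longrightarrow> x \<in> Usq A \<Longrightarrow> 1 / x \<in> A"
proof -
  assume A: "subring_of_reals A" and x: "x \<in> Usq A"
  then obtain u w where uw: "u \<in> A" "w \<in> A" "x = u^2" "w = 1 / u" by (metis Usq_E)
  then have "1 / x = w * w" by (simp add: power2_eq_square)
  then show ?thesis using sr_mult[OF A uw(2) uw(2)] by simp
qed

lemma Usq_mult: "x \<in> Usq A \<Longrightarrow> y \<in> Usq A \<Longrightarrow> subring_of_reals A \<Longrightarrow> x * y \<in> Usq A"
proof -
  assume x: "x \<in> Usq A" and y: "y \<in> Usq A" and A: "subring_of_reals A"
  obtain u w where uw: "u \<in> A" "w \<in> A" "x = u^2" "u \<noteq> 0" "w = 1 / u" using x by (metis Usq_E)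
  obtain u' w' where uw': "u' \<in> A" "w' \<in> A" "y = u'^2" "u' \<noteq> 0" "w' = 1 / u'" using y by (metis Usq_E)
  have "(u * u') * (w * w') = 1" using uw uw' by simp
  moreover have "x * y = (u * u')^2" using uw uw' by (simp add: power_mult_distrib)
  ultimately show ?thesis unfolding Usq_def using sr_mult[OF A uw(1) uw'(1)] sr_mult[OF A uw(2) uw'(2)] by blast
qed

lemma Usq_inv: "x \<in> Usq A \<Longrightarrow> 1 / x \<in> Usq A"
proof -
  assume x: "x \<in> Usq A"
  obtain u w where uw: "u \<in> A" "w \<in> A" "x = u^2" "u \<noteq> 0" "w = 1 / u" using x by (metis Usq_E)
  have "1 / x = w^2" using uw by (simp add: power_divide)
  moreover have "w * u = 1" using uw by simp
  ultimately show ?thesis unfolding Usq_def using uw by blast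
qed

lemma Usq_1: "subring_of_reals A \<Longrightarrow> 1 \<in> Usq A"
  unfolding Usq_def using sr_1 by force

section \<open>The basic hyperbolic element\<close>

definition pp :: real where "pp = (1 - sqrt 5) / 2"
definition qq :: real where "qq = (1 + sqrt 5) / 2"

lemma sqrt5: "sqrt 5 > 2" "sqrt 5 < 3" "sqrt 5 ^ 2 = 5"
proof -
  show "sqrt 5 > 2" by (rule real_less_rsqrt) simp
  show "sqrt 5 < 3" by (rule real_sqrt_less_iff[THEN iffD2, of 5 9, simplified]) 
  show "sqrt 5 ^ 2 = 5" by simp
qed

lemma pp_facts: "pp^2 = pp + 1" "pp + 1 > 0" "pp < 0"
  unfolding pp_def using sqrt5 by (auto simp: power2_eq_square field_simps)
lemma qq_facts: "qq^2 = qq + 1" "qq < 2" "qq > 0"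
  unfolding qq_def using sqrt5 by (auto simp: power2_eq_square field_simps)

definition ee :: "real \<Rightarrow> real" where "ee x = (2*x+1)/(x+1)"
definition ee' :: "real \<Rightarrow> real" where "ee' x = (x-1)/(2-x)"

lemma ee_fix: "s^2 = s + 1 \<Longrightarrow> s + 1 \<noteq> 0 \<Longrightarrow> ee s = s"
  unfolding ee_def by (simp add: field_simps power2_eq_square)
lemma ee'_fix: "s^2 = s + 1 \<Longrightarrow> 2 - s \<noteq> 0 \<Longrightarrow> ee' s = s"
  unfolding ee'_def by (simp add: field_simps power2_eq_square)

lemma ee_alt: "s + 1 > 0 \<Longrightarrow> ee s = 2 - 1/(s+1)"
  unfolding ee_def by (simp add: field_simps)
lemma ee'_alt: "s < 2 \<Longrightarrow> ee' s = 1/(2-s) - 1"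
  unfolding ee'_def by (simp add: field_simps)

lemma ee_mono: "s1 + 1 > 0 \<Longrightarrow> s1 \<le> s2 \<Longrightarrow> ee s1 \<le> ee s2"
  using ee_alt[of s1] ee_alt[of s2] by (simp add: frac_le)
lemma ee'_mono: "s2 < 2 \<Longrightarrow> s1 \<le> s2 \<Longrightarrow> ee' s1 \<le> ee' s2"
  using ee'_alt[of s1] ee'_alt[of s2] by (simp add: frac_le)

lemma ee_pp: "ee pp = pp" using ee_fix pp_facts by simp
lemma ee_qq: "ee qq = qq" using ee_fix qq_facts by simp
lemma ee'_pp: "ee' pp = pp" by (rule ee'_fix) (use pp_facts in auto)
lemma ee'_qq: "ee' qq = qq" using ee'_fix qq_facts by simp

lemma ee_in: "pp \<le> s \<Longrightarrow> s \<le> qq \<Longrightarrow> pp \<le> ee s \<and> ee s \<le> qq"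
  using ee_mono[of pp s] ee_mono[of s qq] ee_pp ee_qq pp_facts by simp
lemma ee'_in: "pp \<le> s \<Longrightarrow> s \<le> qq \<Longrightarrow> pp \<le> ee' s \<and> ee' s \<le> qq"
proof -
  assume a: "pp \<le> s" "s \<le> qq"
  then have "s < 2" using qq_facts by linarith
  then show ?thesis using ee'_mono[of s pp] ee'_mono[of qq s] ee'_pp ee'_qq qq_facts a by simp
qed

lemma ee_ee': "s < 2 \<Longrightarrow> ee (ee' s) = s"
  unfolding ee_def ee'_def by (simp add: field_simps)
lemma ee'_ee: "s + 1 > 0 \<Longrightarrow> ee' (ee s) = s"
  unfolding ee_def ee'_def by (simp add: field_simps)

definition phi :: "real \<Rightarrow> real \<Rightarrow> real \<Rightarrow> real" where
  "phi \<alpha> \<beta> t = (ee (\<alpha> * t + \<beta>) - \<beta>) / \<alpha>"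
definition phi' :: "real \<Rightarrow> real \<Rightarrow> real \<Rightarrow> real" where
  "phi' \<alpha> \<beta> t = (ee' (\<alpha> * t + \<beta>) - \<beta>) / \<alpha>"

definition lo :: "real \<Rightarrow> real \<Rightarrow> real" where "lo \<alpha> \<beta> = (pp - \<beta>) / \<alpha>"
definition hi :: "real \<Rightarrow> real \<Rightarrow> real" where "hi \<alpha> \<beta> = (qq - \<beta>) / \<alpha>"

definition gm :: "real \<Rightarrow> real \<Rightarrow> P1 \<Rightarrow> P1" where
  "gm \<alpha> \<beta> = Gphi (lo \<alpha> \<beta>) (hi \<alpha> \<beta>) (phi \<alpha> \<beta>)"

lemma in_lohi: "\<alpha> > 0 \<Longrightarrow> (lo \<alpha> \<beta> \<le> t \<and> t \<le> hi \<alpha> \<beta>) \<longleftrightarrow> (pp \<le> \<alpha> * t + \<beta> \<and> \<alpha> * t + \<beta> \<le> qq)"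
  unfolding lo_def hi_def by (simp add: field_simps)

lemma lo_lt_hi: "\<alpha> > 0 \<Longrightarrow> lo \<alpha> \<beta> < hi \<alpha> \<beta>"
  unfolding lo_def hi_def using pp_facts qq_facts by (simp add: divide_strict_right_mono)

lemma phi_lo: "\<alpha> > 0 \<Longrightarrow> phi \<alpha> \<beta> (lo \<alpha> \<beta>) = lo \<alpha> \<beta>"
  unfolding phi_def lo_def using ee_pp by simp
lemma phi_hi: "\<alpha> > 0 \<Longrightarrow> phi \<alpha> \<beta> (hi \<alpha> \<beta>) = hi \<alpha> \<beta>"
  unfolding phi_def hi_def using ee_qq by simp

lemma phi_bij: assumes a: "\<alpha> > 0" shows "bij_betw (phi \<alpha> \<beta>) {lo \<alpha> \<beta>..hi \<alpha> \<beta>} {lo \<alpha> \<beta>..hi \<alpha> \<beta>}"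
proof (rule bij_betwI[where g = "phi' \<alpha> \<beta>"])
  have e1: "\<alpha> * ((y - \<beta>) / \<alpha>) + \<beta> = y" for y using a by simp
  show "phi \<alpha> \<beta> \<in> {lo \<alpha> \<beta>..hi \<alpha> \<beta>} \<rightarrow> {lo \<alpha> \<beta>..hi \<alpha> \<beta>}"
    using ee_in in_lohi[OF a] unfolding phi_def by (auto simp: e1)
  show "phi' \<alpha> \<beta> \<in> {lo \<alpha> \<beta>..hi \<alpha> \<beta>} \<rightarrow> {lo \<alpha> \<beta>..hi \<alpha> \<beta>}"
    using ee'_in in_lohi[OF a] unfolding phi'_def by (auto simp: e1)
  show "phi' \<alpha> \<beta> (phi \<alpha> \<beta> x) = x" if "x \<in> {lo \<alpha> \<beta>..hi \<alpha> \<beta>}" for x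
  proof -
    have "pp \<le> \<alpha> * x + \<beta>" using that in_lohi[OF a] by auto
    then have "\<alpha> * x + \<beta> + 1 > 0" using pp_facts by linarith
    then show ?thesis unfolding phi_def phi'_def using a by (simp add: e1 ee'_ee)
  qed
  show "phi \<alpha> \<beta> (phi' \<alpha> \<beta> x) = x" if "x \<in> {lo \<alpha> \<beta>..hi \<alpha> \<beta>}" for x
  proof -
    have "\<alpha> * x + \<beta> \<le> qq" using that in_lohi[OF a] by auto
    then have "\<alpha> * x + \<beta> < 2" using qq_facts by linarith
    then show ?thesis unfolding phi_def phi'_def using a by (simp add: e1 ee_ee')
  qed
qed

lemma phi_cont: assumes a: "\<alpha> > 0" shows "continuous_on {lo \<alpha> \<beta>..hi \<alpha> \<beta>} (phi \<alpha> \<beta>)"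
proof -
  have "\<alpha> * x + \<beta> + 1 \<noteq> 0" if "x \<in> {lo \<alpha> \<beta>..hi \<alpha> \<beta>}" for x
  proof -
    have "pp \<le> \<alpha> * x + \<beta>" using that in_lohi[OF a] by auto
    then show ?thesis using pp_facts by linarith
  qed
  then show ?thesis unfolding phi_def ee_def using a by (intro continuous_intros) (auto simp: add.assoc)
qed

lemma gm_homeo: "\<alpha> > 0 \<Longrightarrow> homeomorphic_map P1_top P1_top (gm \<alpha> \<beta>)"
  unfolding gm_def by (rule Gphi_homeo[OF lo_lt_hi phi_cont phi_lo phi_hi phi_bij])

definition Nm :: "real \<Rightarrow> real \<Rightarrow> mat2" where
  "Nm \<alpha> \<beta> = (2 - \<beta>, (1 + \<beta> - \<beta>^2) / \<alpha>, \<alpha>, \<beta> + 1)"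

lemma mob_Nm: assumes a: "\<alpha> > 0" and d: "\<alpha> * t + \<beta> + 1 \<noteq> 0"
  shows "mob (Nm \<alpha> \<beta>) (Some t) = Some (phi \<alpha> \<beta> t)"
proof -
  have d': "\<alpha> * t + (\<beta> + 1) \<noteq> 0" using d by (simp add: add.assoc)
  have "((2 - \<beta>) * t + (1 + \<beta> - \<beta>^2) / \<alpha>) / (\<alpha> * t + (\<beta> + 1)) = phi \<alpha> \<beta> t"
    unfolding phi_def ee_def using a d d' by (simp add: field_simps power2_eq_square)
  then show ?thesis unfolding mob_def Nm_def using d' by simp
qed

lemma Nm_SL2: assumes A: "subring_of_reals A" and a: "\<alpha> \<in> Usq A" and b: "\<beta> \<in> A"
  shows "Nm \<alpha> \<beta> \<in> SL2 A"
proof -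
  have ap: "\<alpha> > 0" using Usq_pos a by blast
  have "2 - \<beta> \<in> A" using sr_diff[OF A sr_2[OF A] b] .
  moreover have "(1 + \<beta> - \<beta>^2) / \<alpha> \<in> A"
  proof -
    have "1 + \<beta> - \<beta>^2 \<in> A" using sr_diff[OF A sr_add[OF A sr_1[OF A] b] sr_mult[OF A b b]] by (simp add: power2_eq_square)
    from sr_mult[OF A this Usq_inv_A[OF A a]] show ?thesis by simp
  qed
  moreover have "\<alpha> \<in> A" using Usq_A[OF A a] .
  moreover have "\<beta> + 1 \<in> A" using sr_add[OF A b sr_1[OF A]] .
  moreover have "(2 - \<beta>) * (\<beta> + 1) - (1 + \<beta> - \<beta>^2) / \<alpha> * \<alpha> = 1"
  proof -
    have "(1 + \<beta> - \<beta>^2) / \<alpha> * \<alpha> = 1 + \<beta> - \<beta>^2" using ap by simp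
    then show ?thesis by (simp add: power2_eq_square algebra_simps)
  qed
  ultimately show ?thesis unfolding SL2_def Nm_def by simp
qed

lemma Nm_hyp: "hyperbolic (Nm \<alpha> \<beta>)"
  unfolding hyperbolic_def Nm_def by simp

definition Id2 :: mat2 where "Id2 = (1, 0, 0, 1)"
lemma mob_Id2: "mob Id2 p = p" unfolding mob_def Id2_def by (cases p) auto
lemma Id2_SL2: "subring_of_reals A \<Longrightarrow> Id2 \<in> SL2 A" unfolding SL2_def Id2_def using sr_0 sr_1 by auto

lemma lo_PA: assumes A: "subring_of_reals A" and a: "\<alpha> \<in> Usq A" and b: "\<beta> \<in> A"
  shows "Some (lo \<alpha> \<beta>) \<in> P_A A"
proof -
  have ap: "\<alpha> > 0" using Usq_pos a by blast
  have "\<alpha> * lo \<alpha> \<beta> + \<beta> + 1 \<noteq> 0" unfolding lo_def using ap pp_facts by simp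
  then have "mob (Nm \<alpha> \<beta>) (Some (lo \<alpha> \<beta>)) = Some (lo \<alpha> \<beta>)" using mob_Nm[OF ap] phi_lo[OF ap] by simp
  then show ?thesis unfolding P_A_def using Nm_SL2[OF A a b] Nm_hyp by blast
qed

lemma hi_PA: assumes A: "subring_of_reals A" and a: "\<alpha> \<in> Usq A" and b: "\<beta> \<in> A"
  shows "Some (hi \<alpha> \<beta>) \<in> P_A A"
proof -
  have ap: "\<alpha> > 0" using Usq_pos a by blast
  have "\<alpha> * hi \<alpha> \<beta> + \<beta> + 1 \<noteq> 0" unfolding hi_def using ap qq_facts by simp
  then have "mob (Nm \<alpha> \<beta>) (Some (hi \<alpha> \<beta>)) = Some (hi \<alpha> \<beta>)" using mob_Nm[OF ap] phi_hi[OF ap] by simp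
  then show ?thesis unfolding P_A_def using Nm_SL2[OF A a b] Nm_hyp by blast
qed

lemma gm_G: assumes A: "subring_of_reals A" and a: "\<alpha> \<in> Usq A" and b: "\<beta> \<in> A"
  shows "gm \<alpha> \<beta> \<in> G_A A"
proof -
  have ap: "\<alpha> > 0" using Usq_pos a by blast
  let ?l = "lo \<alpha> \<beta>" and ?h = "hi \<alpha> \<beta>"
  have lh: "?l < ?h" by (rule lo_lt_hi[OF ap])
  let ?ps = "[(Some ?l, Some ?h, Nm \<alpha> \<beta>), (Some ?h, Some ?l, Id2)]"
  have c1: "cint (Some ?l) (Some ?h) = Some ` {?l..?h}" using lh by (simp add: cint_def)
  have c2: "cint (Some ?h) (Some ?l) = Some ` {?h..} \<union> {None} \<union> Some ` {..?l}" using lh by (simp add: cint_def)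
  have U: "(\<Union>(x,y,M)\<in>set ?ps. cint x y) = UNIV"
  proof -
    have "p \<in> cint (Some ?l) (Some ?h) \<union> cint (Some ?h) (Some ?l)" for p
    proof (cases p)
      case (Some t) then show ?thesis unfolding c1 c2 by (cases "t \<le> ?l"; cases "?h \<le> t") auto
    qed (simp add: c2)
    then show ?thesis by auto
  qed
  have P1: "\<forall>p\<in>cint (Some ?l) (Some ?h). gm \<alpha> \<beta> p = mob (Nm \<alpha> \<beta>) p"
  proof
    fix p assume "p \<in> cint (Some ?l) (Some ?h)"
    then obtain t where t: "p = Some t" "?l \<le> t" "t \<le> ?h" unfolding c1 by auto
    have "pp \<le> \<alpha> * t + \<beta>" using t in_lohi[OF ap] by auto
    then have "\<alpha> * t + \<beta> + 1 \<noteq> 0" using pp_facts by linarith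
    then show "gm \<alpha> \<beta> p = mob (Nm \<alpha> \<beta>) p" using t mob_Nm[OF ap] unfolding gm_def by simp
  qed
  have P2: "\<forall>p\<in>cint (Some ?h) (Some ?l). gm \<alpha> \<beta> p = mob Id2 p"
  proof
    fix p assume "p \<in> cint (Some ?h) (Some ?l)"
    then have "p = None \<or> (\<exists>t. p = Some t \<and> (?h \<le> t \<or> t \<le> ?l))" unfolding c2 by auto
    then show "gm \<alpha> \<beta> p = mob Id2 p"
    proof
      assume "\<exists>t. p = Some t \<and> (?h \<le> t \<or> t \<le> ?l)"
      then obtain t where t: "p = Some t" "?h \<le> t \<or> t \<le> ?l" by blast
      have "(if ?l \<le> t \<and> t \<le> ?h then phi \<alpha> \<beta> t else t) = t"
        using t(2) lh phi_lo[OF ap] phi_hi[OF ap] by auto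
      then show ?thesis using t(1) unfolding gm_def mob_Id2 by simp
    qed (simp add: gm_def mob_Id2)
  qed
  have "\<forall>(x,y,M)\<in>set ?ps. x \<in> P_A A \<and> y \<in> P_A A \<and> M \<in> SL2 A \<and> (\<forall>p\<in>cint x y. gm \<alpha> \<beta> p = mob M p)"
    using lo_PA[OF A a b] hi_PA[OF A a b] Nm_SL2[OF A a b] Id2_SL2[OF A] P1 P2 by auto
  then show ?thesis unfolding G_A_def using gm_homeo[OF ap] U by blast
qed

lemma gm_X: assumes A: "subring_of_reals A" and a: "\<alpha> \<in> Usq A" and b: "\<beta> \<in> A"
  shows "gm \<alpha> \<beta> \<in> H_A A - {id}"
proof -
  have ap: "\<alpha> > 0" using Usq_pos a by blast
  have "gm \<alpha> \<beta> None = None" unfolding gm_def by simp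
  moreover have "gm \<alpha> \<beta> \<noteq> id"
  proof
    assume e: "gm \<alpha> \<beta> = id"
    let ?t = "- \<beta> / \<alpha>"
    have at: "\<alpha> * ?t + \<beta> = 0" using ap by simp
    have "lo \<alpha> \<beta> \<le> ?t \<and> ?t \<le> hi \<alpha> \<beta>" using in_lohi[OF ap] at pp_facts qq_facts by simp
    then have "gm \<alpha> \<beta> (Some ?t) = Some (phi \<alpha> \<beta> ?t)" unfolding gm_def by simp
    moreover have "phi \<alpha> \<beta> ?t = (1 - \<beta>) / \<alpha>" unfolding phi_def at by (simp add: ee_def)
    ultimately have "(1 - \<beta>) / \<alpha> = - \<beta> / \<alpha>" using e by simp
    then show False using ap by (simp add: field_simps)
  qed
  ultimately show ?thesis unfolding H_A_def using gm_G[OF A a b] by simp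
qed



lemma G_bij: "h \<in> G_A A \<Longrightarrow> bij h"
  unfolding G_A_def bij_def using homeomorphic_imp_surjective_map homeomorphic_imp_injective_map topspace_P1
  by fastforce

lemma piece_dich:
  "(\<exists>b. \<forall>t. Some t \<in> cint x y \<longrightarrow> t \<le> b) \<or> (None \<in> cint x y \<and> (\<exists>a. \<forall>t\<ge>a. Some t \<in> cint x y))"
proof (cases x; cases y)
  fix a b assume xy: "x = Some a" "y = Some b"
  show ?thesis
  proof (cases "a \<le> b")
    case True then show ?thesis using xy by (auto simp: cint_def)
  next
    case False then show ?thesis using xy by (auto simp: cint_def)
  qed
qed (auto simp: cint_def)

lemma list_bound:
  assumes "\<forall>p\<in>set ps. \<exists>b::real. \<forall>t. Some t \<in> S p \<longrightarrow> t \<le> b"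
  shows "\<exists>B. \<forall>p\<in>set ps. \<forall>t. Some t \<in> S p \<longrightarrow> t \<le> B"
  using assms
proof (induction ps)
  case Nil then show ?case by simp
next
  case (Cons p ps)
  obtain b where b: "\<forall>t. Some t \<in> S p \<longrightarrow> t \<le> b" using Cons.prems by auto
  obtain B where B: "\<forall>p\<in>set ps. \<forall>t. Some t \<in> S p \<longrightarrow> t \<le> B" using Cons by auto
  show ?case by (rule exI[of _ "max b B"]) (use b B in fastforce)
qed

lemma germ:
  assumes Asr: "subring_of_reals A" and h: "h \<in> H_A A"
  shows "\<exists>R \<alpha>' \<beta>'. \<alpha>' \<in> Usq A \<and> \<beta>' \<in> A \<and> (\<forall>t\<ge>R. h (Some t) = Some (\<alpha>' * t + \<beta>'))"
proof -
  have hG: "h \<in> G_A A" and h0: "h None = None" using h unfolding H_A_def by auto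
  obtain ps :: "(P1 \<times> P1 \<times> mat2) list" where
    U: "(\<Union>(x,y,M)\<in>set ps. cint x y) = UNIV" and
    C: "\<forall>(x,y,M)\<in>set ps. x \<in> P_A A \<and> y \<in> P_A A \<and> M \<in> SL2 A \<and> (\<forall>p\<in>cint x y. h p = mob M p)"
    using hG unfolding G_A_def by blast
  let ?S = "\<lambda>pc::P1 \<times> P1 \<times> mat2. cint (fst pc) (fst (snd pc))"
  have "\<exists>pc\<in>set ps. None \<in> ?S pc \<and> (\<exists>a. \<forall>t\<ge>a. Some t \<in> ?S pc)"
  proof (rule ccontr)
    assume "\<not> ?thesis"
    then have "\<forall>pc\<in>set ps. \<exists>b. \<forall>t. Some t \<in> ?S pc \<longrightarrow> t \<le> b"
      using piece_dich by blast
    then obtain B where B: "\<forall>pc\<in>set ps. \<forall>t. Some t \<in> ?S pc \<longrightarrow> t \<le> B"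
      using list_bound[of ps ?S] by blast
    have "Some (B + 1) \<in> (\<Union>(x,y,M)\<in>set ps. cint x y)" using U by simp
    then obtain pc where "pc \<in> set ps" "Some (B + 1) \<in> ?S pc" by (auto simp: case_prod_beta)
    then show False using B by fastforce
  qed
  then obtain x y M a where pc: "(x,y,M) \<in> set ps" "None \<in> cint x y" "\<forall>t\<ge>a. Some t \<in> cint x y"
    by auto
  have M: "M \<in> SL2 A" and hM: "\<forall>p\<in>cint x y. h p = mob M p" using C pc(1) by auto
  obtain m1 m2 m3 m4 where Mm: "M = (m1, m2, m3, m4)" by (cases M) auto
  have mA: "m1 \<in> A" "m2 \<in> A" "m3 \<in> A" "m4 \<in> A" "m1 * m4 - m2 * m3 = 1" using M Mm unfolding SL2_def by auto
  have "mob M None = None" using hM pc(2) h0 by metis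
  then have m3: "m3 = 0" unfolding mob_def Mm by (auto split: if_splits)
  then have d: "m1 * m4 = 1" using mA by simp
  then have m40: "m4 \<noteq> 0" by auto
  have m10: "m1 \<noteq> 0" using d by auto
  have m4: "m4 = 1 / m1" using d m10 by (simp add: eq_divide_eq mult.commute)
  show ?thesis
  proof (intro exI conjI)
    show "m1^2 \<in> Usq A" unfolding Usq_def using mA d by blast
    show "m1 * m2 \<in> A" using sr_mult[OF Asr mA(1) mA(2)] .
    show "\<forall>t\<ge>a. h (Some t) = Some (m1^2 * t + m1 * m2)"
    proof (intro allI impI)
      fix t assume "a \<le> t"
      then have "h (Some t) = mob M (Some t)" using hM pc(3) by blast
      also have "\<dots> = Some ((m1 * t + m2) / m4)" unfolding mob_def Mm using m3 m40 by simp
      also have "(m1 * t + m2) / m4 = m1^2 * t + m1 * m2" unfolding m4 using m10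
        by (simp add: field_simps power2_eq_square)
      finally show "h (Some t) = Some (m1^2 * t + m1 * m2)" .
    qed
  qed
qed

lemma H_bij: "h \<in> H_A A \<Longrightarrow> bij h" unfolding H_A_def using G_bij by blast

lemma conj_gm:
  assumes hH: "h \<in> H_A A" and germ: "\<forall>t\<ge>R. h (Some t) = Some (\<alpha>' * t + \<beta>')"
    and a': "\<alpha>' > 0" and a: "\<alpha> > 0" and supp: "\<alpha>' * R + \<beta>' \<le> lo \<alpha> \<beta>"
  shows "inv h \<circ> gm \<alpha> \<beta> \<circ> h = gm (\<alpha> * \<alpha>') (\<beta> + \<alpha> * \<beta>')"
proof
  fix x
  have bij: "bij h" using H_bij[OF hH] .
  have h0: "h None = None" using hH unfolding H_A_def by simp
  have invh: "inv h (h z) = z" for z using bij by (simp add: bij_is_inj)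
  have aa: "\<alpha> * \<alpha>' > 0" using a a' by simp
  have F1: "h (Some ((s - \<beta>') / \<alpha>')) = Some s" if "\<alpha>' * R + \<beta>' \<le> s" for s
  proof -
    have "R \<le> (s - \<beta>') / \<alpha>'" using that a' by (simp add: field_simps)
    then have "h (Some ((s - \<beta>') / \<alpha>')) = Some (\<alpha>' * ((s - \<beta>') / \<alpha>') + \<beta>')" using germ by blast
    then show ?thesis using a' by simp
  qed
  have F2: "\<alpha>' * R + \<beta>' \<le> s" if "lo \<alpha> \<beta> \<le> s" for s using that supp by linarith
  have NI: "(lo (\<alpha> * \<alpha>') (\<beta> + \<alpha> * \<beta>') \<le> t \<and> t \<le> hi (\<alpha> * \<alpha>') (\<beta> + \<alpha> * \<beta>'))
      \<longleftrightarrow> (lo \<alpha> \<beta> \<le> \<alpha>' * t + \<beta>' \<and> \<alpha>' * t + \<beta>' \<le> hi \<alpha> \<beta>)" for t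
  proof -
    have "\<alpha> * (\<alpha>' * t + \<beta>') + \<beta> = \<alpha> * \<alpha>' * t + (\<beta> + \<alpha> * \<beta>')" by (simp add: algebra_simps)
    then show ?thesis unfolding in_lohi[OF aa] in_lohi[OF a] by (simp add: add_ac)
  qed
  show "(inv h \<circ> gm \<alpha> \<beta> \<circ> h) x = gm (\<alpha> * \<alpha>') (\<beta> + \<alpha> * \<beta>') x"
  proof (cases "\<exists>t. x = Some t \<and> lo \<alpha> \<beta> \<le> \<alpha>' * t + \<beta>' \<and> \<alpha>' * t + \<beta>' \<le> hi \<alpha> \<beta>")
    case True
    then obtain t where t: "x = Some t" "lo \<alpha> \<beta> \<le> \<alpha>' * t + \<beta>'" "\<alpha>' * t + \<beta>' \<le> hi \<alpha> \<beta>" by blast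
    let ?c = "\<alpha>' * t + \<beta>'"
    have "R \<le> t"
    proof -
      have "\<alpha>' * R + \<beta>' \<le> ?c" using F2 t by blast
      then show ?thesis using a' by simp
    qed
    then have hx: "h x = Some ?c" using germ t by simp
    let ?s2 = "phi \<alpha> \<beta> ?c"
    have g1: "gm \<alpha> \<beta> (Some ?c) = Some ?s2" unfolding gm_def using t by simp
    have s2in: "lo \<alpha> \<beta> \<le> ?s2" using phi_bij[OF a, of \<beta>] t unfolding bij_betw_def by auto
    have "h (Some ((?s2 - \<beta>') / \<alpha>')) = Some ?s2" using F1 F2[OF s2in] by blast
    then have ih: "inv h (Some ?s2) = Some ((?s2 - \<beta>') / \<alpha>')" using invh by metis
    have rhs: "gm (\<alpha> * \<alpha>') (\<beta> + \<alpha> * \<beta>') x = Some (phi (\<alpha> * \<alpha>') (\<beta> + \<alpha> * \<beta>') t)"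
      unfolding gm_def using t NI by simp
    have "(?s2 - \<beta>') / \<alpha>' = phi (\<alpha> * \<alpha>') (\<beta> + \<alpha> * \<beta>') t"
    proof -
      have e: "\<alpha> * (\<alpha>' * t + \<beta>') + \<beta> = \<alpha> * \<alpha>' * t + (\<beta> + \<alpha> * \<beta>')" by (simp add: algebra_simps)
      show ?thesis unfolding phi_def e using a a' by (simp add: field_simps)
    qed
    then show ?thesis using hx g1 ih rhs by simp
  next
    case False
    have rhs: "gm (\<alpha> * \<alpha>') (\<beta> + \<alpha> * \<beta>') x = x"
    proof (cases x)
      case (Some t) then show ?thesis unfolding gm_def using False NI by auto
    qed (simp add: gm_def)
    have fx: "gm \<alpha> \<beta> (h x) = h x"
    proof (cases "h x")
      case None then show ?thesis by (simp add: gm_def)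
    next
      case (Some s)
      show ?thesis
      proof (cases "lo \<alpha> \<beta> \<le> s \<and> s \<le> hi \<alpha> \<beta>")
        case True
        have "h (Some ((s - \<beta>') / \<alpha>')) = h x" using F1 F2 True Some by simp
        then have "x = Some ((s - \<beta>') / \<alpha>')" using bij by (metis bij_is_inj injD)
        moreover have "\<alpha>' * ((s - \<beta>') / \<alpha>') + \<beta>' = s" using a' by simp
        ultimately show ?thesis using False True by auto
      next
        case False then show ?thesis using Some by (auto simp: gm_def)
      qed
    qed
    show ?thesis using fx rhs invh by simp
  qed
qed



lemma subgrp_A: "subring_of_reals A \<Longrightarrow> subgrp A"
  unfolding subgrp_def subring_of_reals_def by auto

lemma exp_LL: "l \<in> ln ` Usq A \<Longrightarrow> exp l \<in> Usq A"
  using Usq_pos by auto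

lemma subgrp_LL: assumes A: "subring_of_reals A" shows "subgrp (ln ` Usq A)"
  unfolding subgrp_def
proof (intro conjI ballI)
  show "0 \<in> ln ` Usq A" using Usq_1[OF A] by (metis image_eqI ln_one)
  fix x y assume x: "x \<in> ln ` Usq A" and y: "y \<in> ln ` Usq A"
  obtain a b where ab: "a \<in> Usq A" "b \<in> Usq A" "x = ln a" "y = ln b" using x y by auto
  have ap: "a > 0" "b > 0" using ab Usq_pos by auto
  have "x + y = ln (a * b)" using ab ap by (simp add: ln_mult)
  then show "x + y \<in> ln ` Usq A" using Usq_mult[OF ab(1,2) A] by blast
  have "x - y = ln (a * (1 / b))" using ab ap by (simp add: ln_mult ln_div)
  then show "x - y \<in> ln ` Usq A" using Usq_mult[OF ab(1) Usq_inv[OF ab(2)] A] by blast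
qed

theorem proposition2:
  fixes A :: "real set"
  assumes "subring_of_reals A"
  shows "inner_amenable (H_A A)"
proof -
  note A = assms
  let ?L = "ln ` Usq A"
  obtain U1 where U1: "ugrp A U1" using ex_ugrp[OF subgrp_A[OF A]] by blast
  obtain U2 where U2: "ugrp ?L U2" using ex_ugrp[OF subgrp_LL[OF A]] by blast
  let ?X = "H_A A - {id}"
  define gg where "gg l \<beta> = gm (exp l) \<beta>" for l \<beta>
  define inner where "inner f l = muG A U1 (\<lambda>\<beta>. f (gg l \<beta>))" for f :: "(P1 \<Rightarrow> P1) \<Rightarrow> real" and l
  define m where "m f = muG ?L U2 (inner f)" for f
  have ggX: "gg l \<beta> \<in> ?X" if "l \<in> ?L" "\<beta> \<in> A" for l \<beta>
    unfolding gg_def using gm_X[OF A exp_LL[OF that(1)] that(2)] .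
  have bddA: "bddG A (\<lambda>\<beta>. f (gg l \<beta>))" if "bdd_on ?X f" "l \<in> ?L" for f l
    using that ggX unfolding bdd_on_def bddG_def by blast
  have bndA: "\<exists>B. \<forall>l\<in>?L. \<bar>inner f l\<bar> \<le> B" if fb: "bdd_on ?X f" for f
  proof -
    obtain B where B: "\<forall>x\<in>?X. \<bar>f x\<bar> \<le> B" using fb unfolding bdd_on_def by blast
    have "\<bar>inner f l\<bar> \<le> B" if "l \<in> ?L" for l
      unfolding inner_def by (rule ugrp.mu_bound[OF U1]) (use B ggX that in blast)
    then show ?thesis by blast
  qed
  then have bddL: "bddG ?L (inner f)" if "bdd_on ?X f" for f using that unfolding bddG_def by blast
  have mean: "is_mean ?X m"
    unfolding is_mean_def
  proof (intro conjI allI impI)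
    fix f g assume f: "bdd_on ?X f" and g: "bdd_on ?X g"
    have "\<forall>l\<in>?L. inner (\<lambda>x. f x + g x) l = inner f l + inner g l"
      unfolding inner_def using ugrp.mu_add[OF U1 bddA[OF f] bddA[OF g]] by blast
    then have "m (\<lambda>x. f x + g x) = muG ?L U2 (\<lambda>l. inner f l + inner g l)"
      unfolding m_def by (rule ugrp.mu_localG[OF U2])
    also have "\<dots> = m f + m g" unfolding m_def by (rule ugrp.mu_add[OF U2 bddL[OF f] bddL[OF g]])
    finally show "m (\<lambda>x. f x + g x) = m f + m g" .
  next
    fix f and c :: real assume f: "bdd_on ?X f"
    have "\<forall>l\<in>?L. inner (\<lambda>x. c * f x) l = c * inner f l"
      unfolding inner_def using ugrp.mu_cmult[OF U1 bddA[OF f]] by blast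
    then have "m (\<lambda>x. c * f x) = muG ?L U2 (\<lambda>l. c * inner f l)"
      unfolding m_def by (rule ugrp.mu_localG[OF U2])
    also have "\<dots> = c * m f" unfolding m_def by (rule ugrp.mu_cmult[OF U2 bddL[OF f]])
    finally show "m (\<lambda>x. c * f x) = c * m f" .
  next
    fix f assume f: "bdd_on ?X f" and p: "\<forall>x\<in>?X. 0 \<le> f x"
    have "\<forall>l\<in>?L. 0 \<le> inner f l"
      unfolding inner_def using ugrp.mu_nonneg[OF U1 bddA[OF f]] p ggX by blast
    then show "0 \<le> m f" unfolding m_def by (rule ugrp.mu_nonneg[OF U2 bddL[OF f]])
  next
    have "inner (\<lambda>x. 1) = (\<lambda>l. 1)" unfolding inner_def using ugrp.mu_one[OF U1] by simp
    then show "m (\<lambda>x. 1) = 1" unfolding m_def using ugrp.mu_one[OF U2] by simp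
  qed
  have inv: "m (\<lambda>x. f (inv h \<circ> x \<circ> h)) = m f" if h: "h \<in> H_A A" and f: "bdd_on ?X f" for h f
  proof -
    obtain R \<alpha>' \<beta>' where g: "\<alpha>' \<in> Usq A" "\<beta>' \<in> A" "\<forall>t\<ge>R. h (Some t) = Some (\<alpha>' * t + \<beta>')"
      using germ[OF A h] by blast
    have a'p: "\<alpha>' > 0" using Usq_pos g(1) by blast
    define l' where "l' = ln \<alpha>'"
    have l'L: "l' \<in> ?L" unfolding l'_def using g(1) by blast
    have el': "exp l' = \<alpha>'" unfolding l'_def using a'p by simp
    have step: "inner (\<lambda>x. f (inv h \<circ> x \<circ> h)) l = inner f (l + l')" if l: "l \<in> ?L" for l
    proof -
      define \<alpha> where "\<alpha> = exp l"
      have aU: "\<alpha> \<in> Usq A" unfolding \<alpha>_def using exp_LL[OF l] .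
      have ap: "\<alpha> > 0" unfolding \<alpha>_def by simp
      have llL: "l + l' \<in> ?L" using subgrp_add[OF subgrp_LL[OF A] l l'L] .
      have "inner (\<lambda>x. f (inv h \<circ> x \<circ> h)) l = muG A U1 (\<lambda>\<beta>. f (gg (l + l') (\<beta> + \<alpha> * \<beta>')))"
        unfolding inner_def
      proof (rule ugrp.mu_local_neg[OF U1 sr_1[OF A], where R = "\<alpha> * (\<alpha>' * R + \<beta>') - pp"], intro ballI impI)
        fix \<beta> assume "\<beta> \<in> A" "\<beta> \<le> - (\<alpha> * (\<alpha>' * R + \<beta>') - pp)"
        then have "\<alpha> * (\<alpha>' * R + \<beta>') \<le> pp - \<beta>" by simp
        then have supp: "\<alpha>' * R + \<beta>' \<le> lo \<alpha> \<beta>" unfolding lo_def using ap by (simp add: field_simps)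
        have "inv h \<circ> gg l \<beta> \<circ> h = gm (\<alpha> * \<alpha>') (\<beta> + \<alpha> * \<beta>')"
          unfolding gg_def \<alpha>_def[symmetric] by (rule conj_gm[OF h g(3) a'p ap supp])
        also have "\<dots> = gg (l + l') (\<beta> + \<alpha> * \<beta>')" unfolding gg_def \<alpha>_def using el' by (simp add: exp_add)
        finally show "f (inv h \<circ> gg l \<beta> \<circ> h) = f (gg (l + l') (\<beta> + \<alpha> * \<beta>'))" by simp
      qed
      also have "\<dots> = inner f (l + l')" unfolding inner_def
      proof (rule ugrp.mu_inv[OF U1 _ bddA[OF f llL]])
        show "\<alpha> * \<beta>' \<in> A" using sr_mult[OF A Usq_A[OF A aU] g(2)] .
      qed
      finally show ?thesis .
    qed
    have "m (\<lambda>x. f (inv h \<circ> x \<circ> h)) = muG ?L U2 (\<lambda>l. inner f (l + l'))"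
      unfolding m_def by (rule ugrp.mu_localG[OF U2]) (use step in blast)
    also have "\<dots> = m f" unfolding m_def by (rule ugrp.mu_inv[OF U2 l'L bddL[OF f]])
    finally show ?thesis .
  qed
  show ?thesis unfolding inner_amenable_def using mean inv by blast
qed

end
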